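(* Let $(\Omega,\mathcal{F},\mathsf{P})$ be atomless, let $u$ be a law invariant coherent utility on $L^0$ with determining set $\mathcal{D}$, and let $Y$ be a random vector. Then $\mathsf{E}(\mathcal{D}\mid Y)\subseteq\mathcal{D}$.
   Context: Let $(\Omega,\mathcal{F},\mathsf{P})$ be a probability space, $L^0$ the space of all real random variables, and $\mathcal{P}$ the set of probability measures on $\mathcal{F}$ absolutely continuous with respect to $\mathsf{P}$; measures are identified with their densities $Z=d\mathsf{Q}/d\mathsf{P}$. For $\mathsf{Q}\in\mathcal{P}$, $\mathsf{E}_\mathsf{Q}X:=\mathsf{E}_\mathsf{Q}X^+-\mathsf{E}_\mathsf{Q}X^-$ with the convention $\infty-\infty=-\infty$. A coherent utility on $L^0$ is a map $u:L^0\to[-\infty,\infty]$ of the form $u(X)=\inf_{\mathsf{Q}\in\mathcal{D}}\mathsf{E}_\mathsf{Q}X$ for a nonempty $\mathcal{D}\subseteq\mathcal{P}$; its determining set is the largest such set, $\{\mathsf{Q}\in\mathcal{P}:\mathsf{E}_\mathsf{Q}X\ge u(X)\ \forall X\in L^0\}$. $u$ is law invariant if $u(X)=u(X')$ whenever $X,X'$ have the same distribution. $\mathsf{E}(\mathcal{D}\mid Y):=\{\mathsf{E}(Z\mid Y):Z\in\mathcal{D}\}$. *)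

theory Defs
  imports "HOL-Probability.Probability"
begin

definition atomless :: "'a measure \<Rightarrow> bool" where
  "atomless M \<longleftrightarrow> (\<forall>A\<in>sets M. measure M A > 0 \<longrightarrow>
     (\<exists>B\<in>sets M. B \<subseteq> A \<and> 0 < measure M B \<and> measure M B < measure M A))"

text \<open>Densities dQ/dP of probability measures absolutely continuous w.r.t. P
  (identified with the measures; defined up to P-null sets).\<close>
definition densities :: "'a measure \<Rightarrow> ('a \<Rightarrow> real) set" where
  "densities M = {Z. Z \<in> borel_measurable M \<and> (AE x in M. 0 \<le> Z x) \<and>
                    integrable M Z \<and> integral\<^sup>L M Z = 1}"

text \<open>E_Q X = E_Q X^+ - E_Q X^-, with the convention \<infinity> - \<infinity> = -\<infinity>.\<close>
definition expQ :: "'a measure \<Rightarrow> ('a \<Rightarrow> real) \<Rightarrow> ('a \<Rightarrow> real) \<Rightarrow> ereal" where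
  "expQ M Z X =
     (let p = (\<integral>\<^sup>+ x. ennreal (Z x * max (X x) 0) \<partial>M);
          n = (\<integral>\<^sup>+ x. ennreal (Z x * max (- X x) 0) \<partial>M)
      in if n = \<infinity> then - \<infinity> else enn2ereal p - enn2ereal n)"

definition coherent_utility :: "'a measure \<Rightarrow> (('a \<Rightarrow> real) \<Rightarrow> ereal) \<Rightarrow> bool" where
  "coherent_utility M u \<longleftrightarrow> (\<exists>D. D \<noteq> {} \<and> D \<subseteq> densities M \<and>
     (\<forall>X\<in>borel_measurable M. u X = (INF Z\<in>D. expQ M Z X)))"

text \<open>Determining set: the largest set of measures representing u.\<close>
definition determining_set :: "'a measure \<Rightarrow> (('a \<Rightarrow> real) \<Rightarrow> ereal) \<Rightarrow> ('a \<Rightarrow> real) set" where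
  "determining_set M u = {Z \<in> densities M. \<forall>X\<in>borel_measurable M. u X \<le> expQ M Z X}"

definition law_invariant :: "'a measure \<Rightarrow> (('a \<Rightarrow> real) \<Rightarrow> ereal) \<Rightarrow> bool" where
  "law_invariant M u \<longleftrightarrow> (\<forall>X\<in>borel_measurable M. \<forall>X'\<in>borel_measurable M.
     distr M borel X = distr M borel X' \<longrightarrow> u X = u X')"

end

theory Submission
  imports Defs
begin

context prob_space
begin

lemma atomless_half:
  assumes al: "atomless M" and A: "A \<in> events" and pA: "prob A > 0"
  shows "\<exists>B\<in>events. B \<subseteq> A \<and> 0 < prob B \<and> prob B \<le> prob A / 2"
proof -
  obtain B where B: "B \<in> events" "B \<subseteq> A" "0 < prob B" "prob B < prob A"
    using al A pA unfolding atomless_def by blast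
  show ?thesis
  proof (cases "prob B \<le> prob A / 2")
    case True then show ?thesis using B by blast
  next
    case False
    have "prob (A - B) = prob A - prob B" using B A by (simp add: finite_measure_Diff)
    then show ?thesis using False B A
      by (intro bexI[of _ "A - B"]) auto
  qed
qed

lemma atomless_small_pow:
  assumes al: "atomless M" and A: "A \<in> events" and pA: "prob A > 0"
  shows "\<exists>B\<in>events. B \<subseteq> A \<and> 0 < prob B \<and> prob B \<le> prob A / 2 ^ n"
proof (induction n)
  case 0 then show ?case using A pA by auto
next
  case (Suc n)
  then obtain B where B: "B\<in>events" "B \<subseteq> A" "0 < prob B" "prob B \<le> prob A / 2 ^ n" by blast
  then obtain C where C: "C\<in>events" "C \<subseteq> B" "0 < prob C" "prob C \<le> prob B / 2"
    using atomless_half[OF al] by blast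
  have "prob C \<le> prob B / 2" using C by simp
  also have "\<dots> \<le> (prob A / 2 ^ n) / 2" using B(4) by (simp add: divide_right_mono)
  finally have "prob C \<le> prob A / 2 ^ Suc n" by simp
  then show ?case using B C by blast
qed

lemma atomless_small:
  assumes al: "atomless M" and A: "A \<in> events" and pA: "prob A > 0" and e: "e > 0"
  shows "\<exists>B\<in>events. B \<subseteq> A \<and> 0 < prob B \<and> prob B < e"
proof -
  obtain n where n: "(1/2::real) ^ n < e" using real_arch_pow_inv[OF e, of "1/2"] by auto
  obtain B where B: "B\<in>events" "B \<subseteq> A" "0 < prob B" "prob B \<le> prob A / 2 ^ n"
    using atomless_small_pow[OF al A pA] by blast
  have "prob A / 2 ^ n \<le> 1 / 2 ^ n" by (simp add: divide_right_mono)
  also have "\<dots> = (1/2)^n" by (simp add: power_one_over)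
  finally show ?thesis using B n by (intro bexI[of _ B]) auto
qed

end

definition pickset :: "'a measure \<Rightarrow> 'a set \<Rightarrow> real \<Rightarrow> 'a set \<Rightarrow> 'a set" where
 "pickset M A t Bn = (SOME C. C \<in> sets M \<and> C \<subseteq> A - Bn \<and> measure M Bn + measure M C \<le> t \<and>
    (\<forall>C'. C' \<in> sets M \<and> C' \<subseteq> A - Bn \<and> measure M Bn + measure M C' \<le> t \<longrightarrow> measure M C' \<le> 2 * measure M C))"

primrec greedy :: "'a measure \<Rightarrow> 'a set \<Rightarrow> real \<Rightarrow> nat \<Rightarrow> 'a set" where
  "greedy M A t 0 = {}"
| "greedy M A t (Suc n) = greedy M A t n \<union> pickset M A t (greedy M A t n)"

context prob_space
begin

lemma pick_ex:
  assumes "prob Bn \<le> t"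
  shows "\<exists>C. C \<in> events \<and> C \<subseteq> A - Bn \<and> prob Bn + prob C \<le> t \<and>
    (\<forall>C'. C' \<in> events \<and> C' \<subseteq> A - Bn \<and> prob Bn + prob C' \<le> t \<longrightarrow> prob C' \<le> 2 * prob C)"
proof -
  define S where "S = {prob C | C. C \<in> events \<and> C \<subseteq> A - Bn \<and> prob Bn + prob C \<le> t}"
  have S0: "0 \<in> S" unfolding S_def using assms by (auto intro!: exI[of _ "{}"])
  have Sb: "bdd_above S" unfolding S_def by (auto intro!: bdd_aboveI[of _ 1])
  have le: "x \<le> Sup S" if "x \<in> S" for x using Sb that by (simp add: cSup_upper)
  show ?thesis
  proof (cases "Sup S \<le> 0")
    case True
    have "prob C' \<le> 0" if "C' \<in> events" "C' \<subseteq> A - Bn" "prob Bn + prob C' \<le> t" for C'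
    proof -
      have "prob C' \<in> S" unfolding S_def using that by blast
      then show ?thesis using le True by fastforce
    qed
    then show ?thesis using assms by (intro exI[of _ "{}"]) simp
  next
    case False
    then have "Sup S / 2 < Sup S" by simp
    then obtain x where "x \<in> S" "Sup S / 2 < x" using S0 Sb less_cSup_iff[of S "Sup S / 2"] by blast
    then obtain C where C: "C \<in> events" "C \<subseteq> A - Bn" "prob Bn + prob C \<le> t" "Sup S / 2 < prob C"
      unfolding S_def by auto
    show ?thesis
    proof (intro exI[of _ C] conjI allI impI C(1-3))
      fix C' assume "C' \<in> events \<and> C' \<subseteq> A - Bn \<and> prob Bn + prob C' \<le> t"
      then have "prob C' \<in> S" unfolding S_def by auto
      then show "prob C' \<le> 2 * prob C" using le C(4) by fastforce
    qed
  qed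
qed

lemma pickset_prop:
  assumes "prob Bn \<le> t"
  shows "pickset M A t Bn \<in> events \<and> pickset M A t Bn \<subseteq> A - Bn \<and> prob Bn + prob (pickset M A t Bn) \<le> t \<and>
    (\<forall>C'. C' \<in> events \<and> C' \<subseteq> A - Bn \<and> prob Bn + prob C' \<le> t \<longrightarrow> prob C' \<le> 2 * prob (pickset M A t Bn))"
  unfolding pickset_def by (rule someI_ex[OF pick_ex[OF assms]])

lemma greedy_props:
  assumes A: "A \<in> events" and t: "0 \<le> t"
  shows "greedy M A t n \<in> events \<and> greedy M A t n \<subseteq> A \<and> prob (greedy M A t n) \<le> t"
proof (induction n)
  case 0
  show ?case using t by auto
next
  case (Suc n)
  let ?B = "greedy M A t n"
  let ?C = "pickset M A t ?B"
  have C: "?C \<in> events" "?C \<subseteq> A - ?B" "prob ?B + prob ?C \<le> t"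
    using Suc.IH pickset_prop[of ?B t A] by auto
  have pB1: "prob (greedy M A t (Suc n)) = prob ?B + prob ?C"
    using C Suc.IH by (subst greedy.simps, intro finite_measure_Union) auto
  show ?case using pB1 C Suc.IH by auto
qed

end

context prob_space
begin

lemma sierpinski:
  assumes al: "atomless M" and A: "A \<in> events" and t: "0 \<le> t" "t \<le> prob A"
  shows "\<exists>B\<in>events. B \<subseteq> A \<and> prob B = t"
proof -
  define g where "g n = greedy M A t n" for n
  have gp: "g n \<in> events" "g n \<subseteq> A" "prob (g n) \<le> t" for n
    using greedy_props[OF A t(1)] unfolding g_def by auto
  define c where "c n = prob (pickset M A t (g n))" for n
  have cp: "pickset M A t (g n) \<in> events \<and> pickset M A t (g n) \<subseteq> A - g n \<and> prob (g n) + c n \<le> t \<and>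
    (\<forall>C'. C' \<in> events \<and> C' \<subseteq> A - g n \<and> prob (g n) + prob C' \<le> t \<longrightarrow> prob C' \<le> 2 * c n)" for n
    using pickset_prop[OF gp(3)] unfolding c_def by blast
  have gS: "g (Suc n) = g n \<union> pickset M A t (g n)" for n unfolding g_def by simp
  have pS: "prob (g (Suc n)) = prob (g n) + c n" for n
    unfolding gS c_def using cp[of n] gp[of n] by (intro finite_measure_Union) auto
  have inc: "incseq g" unfolding incseq_Suc_iff using gS by auto
  define B where "B = (\<Union>n. g n)"
  have B: "B \<in> events" "B \<subseteq> A" using gp unfolding B_def by auto
  have lim: "(\<lambda>n. prob (g n)) \<longlonglongrightarrow> prob B"
    unfolding B_def using inc gp by (intro finite_Lim_measure_incseq) auto
  have pBt: "prob B \<le> t" using lim gp(3) by (meson LIMSEQ_le_const2)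
  have lim2: "(\<lambda>n. prob (g (Suc n))) \<longlonglongrightarrow> prob B" using lim by (rule LIMSEQ_Suc)
  have "(\<lambda>n. prob (g (Suc n)) - prob (g n)) \<longlonglongrightarrow> prob B - prob B"
    using lim lim2 by (intro tendsto_diff)
  then have climit: "c \<longlonglongrightarrow> 0" using pS by simp
  have gB: "g n \<subseteq> B" for n unfolding B_def by auto
  show ?thesis
  proof (cases "prob B = t")
    case True then show ?thesis using B by blast
  next
    case False
    then have lt: "prob B < t" using pBt by simp
    have "prob (A - B) = prob A - prob B" using A B by (simp add: finite_measure_Diff)
    then have "prob (A - B) > 0" using lt t by simp
    moreover have "A - B \<in> events" using A B by auto
    ultimately obtain C where C: "C \<in> events" "C \<subseteq> A - B" "0 < prob C" "prob C < t - prob B"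
      using atomless_small[OF al, of "A - B" "t - prob B"] lt by auto
    have "prob C \<le> 2 * c n" for n
    proof -
      have "prob (g n) \<le> prob B" using gB B gp by (simp add: finite_measure_mono)
      then have "C \<in> events \<and> C \<subseteq> A - g n \<and> prob (g n) + prob C \<le> t" using C gB[of n] by auto
      then show ?thesis using cp[of n] by blast
    qed
    moreover have "(\<lambda>n. 2 * c n) \<longlonglongrightarrow> 2 * 0" using climit by (intro tendsto_mult) auto
    ultimately have "prob C \<le> 0" by (metis LIMSEQ_le_const mult_zero_right)
    then show ?thesis using C by simp
  qed
qed

end

definition zlower :: "'a measure \<Rightarrow> ('a \<Rightarrow> real) \<Rightarrow> 'a set \<Rightarrow> bool" where
  "zlower M Z L \<longleftrightarrow> L \<subseteq> space M \<and> (\<forall>x\<in>L. \<forall>y\<in>space M - L. Z x \<le> Z y)"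

context prob_space
begin

lemma zlower_mid:
  assumes al: "atomless M" and Zm[measurable]: "Z \<in> borel_measurable M"
    and L: "L \<in> events" "zlower M Z L" and L': "L' \<in> events" "zlower M Z L'" and LL: "L \<subseteq> L'"
    and t: "prob L \<le> t" "t \<le> prob L'"
  shows "\<exists>N\<in>events. zlower M Z N \<and> L \<subseteq> N \<and> N \<subseteq> L' \<and> prob N = t"
proof -
  define D where "D = L' - L"
  have D: "D \<in> events" unfolding D_def using L L' by auto
  have pD: "prob D = prob L' - prob L" unfolding D_def using L L' LL by (simp add: finite_measure_Diff' Int_absorb1)
  define \<tau> where "\<tau> = t - prob L"
  have Dsp: "D \<subseteq> space M" using D sets.sets_into_space by auto
  show ?thesis
  proof (cases "\<tau> = 0 \<or> \<tau> = prob D")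
    case True
    then show ?thesis
    proof
      assume "\<tau> = 0" then show ?thesis using L LL unfolding \<tau>_def by auto
    next
      assume "\<tau> = prob D" then show ?thesis using L' LL pD unfolding \<tau>_def by auto
    qed
  next
    case False
    then have tau: "0 < \<tau>" "\<tau> < prob D" using t pD unfolding \<tau>_def by auto
    define phi where "phi s = prob {x\<in>D. Z x \<le> s}" for s
    have Dle[measurable]: "{x\<in>D. Z x \<le> s} \<in> events" for s using D by measurable
    have Dlt[measurable]: "{x\<in>D. Z x < s} \<in> events" for s using D by measurable
    have Deq[measurable]: "{x\<in>D. Z x = s} \<in> events" for s using D by measurable
    have Drange: "range (\<lambda>n. {x\<in>D. Z x \<le> f n}) \<subseteq> events" for f :: "nat \<Rightarrow> real"
      using Dle by blast
    have phimono: "phi a \<le> phi b" if "a \<le> b" for a b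
      unfolding phi_def using that by (intro finite_measure_mono) auto
    have lim_top: "(\<lambda>n. phi (real n)) \<longlonglongrightarrow> prob D"
    proof -
      have "(\<lambda>n. prob {x\<in>D. Z x \<le> real n}) \<longlonglongrightarrow> prob (\<Union>n. {x\<in>D. Z x \<le> real n})"
        by (intro finite_Lim_measure_incseq) (auto simp: incseq_def intro: order_trans)
      moreover have "(\<Union>n. {x\<in>D. Z x \<le> real n}) = D"
        using real_arch_simple by (auto intro: order_trans)
      ultimately show ?thesis unfolding phi_def by simp
    qed
    have lim_bot: "(\<lambda>n. phi (- real n)) \<longlonglongrightarrow> 0"
    proof -
      have "(\<lambda>n. prob {x\<in>D. Z x \<le> - real n}) \<longlonglongrightarrow> prob (\<Inter>n. {x\<in>D. Z x \<le> - real n})"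
        by (intro finite_Lim_measure_decseq) (auto simp: decseq_def intro: order_trans)
      moreover have "(\<Inter>n. {x\<in>D. Z x \<le> - real n}) = {}"
      proof (safe)
        fix x assume "x \<in> (\<Inter>n. {x\<in>D. Z x \<le> - real n})"
        then have "Z x \<le> - real n" for n by auto
        moreover obtain n where "- Z x \<le> real n" using real_arch_simple by blast
        ultimately have "Z x \<le> - real (Suc n)" "- Z x \<le> real n" by blast+
        then show "x \<in> {}" by simp
      qed
      ultimately show ?thesis unfolding phi_def by simp
    qed
    define T where "T = {s. \<tau> \<le> phi s}"
    obtain n1 where n1: "\<tau> < phi (real n1)" using order_tendstoD(1)[OF lim_top tau(2)] by (meson eventually_sequentially order.refl)
    obtain n0 where n0: "phi (- real n0) < \<tau>" using order_tendstoD(2)[OF lim_bot tau(1)] by (meson eventually_sequentially order.refl)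
    have "real n1 \<in> T" using n1 unfolding T_def by simp
    then have Tne: "T \<noteq> {}" by blast
    have Tlow: "- real n0 \<le> s" if "s \<in> T" for s
    proof (rule ccontr)
      assume "\<not> - real n0 \<le> s"
      then have "phi s \<le> phi (- real n0)" by (intro phimono) simp
      then show False using that n0 unfolding T_def by simp
    qed
    have Tbdd: "bdd_below T" using Tlow by (intro bdd_belowI[of _ "- real n0"]) blast
    define d where "d = Inf T"
    have phid: "\<tau> \<le> phi d"
    proof -
      have L1: "(\<lambda>n. prob {x\<in>D. Z x \<le> d + 1 / Suc n}) \<longlonglongrightarrow> prob (\<Inter>n. {x\<in>D. Z x \<le> d + 1 / Suc n})"
      proof (intro finite_Lim_measure_decseq)
        show "decseq (\<lambda>n. {x \<in> D. Z x \<le> d + 1 / real (Suc n)})"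
        proof (rule decseq_SucI, safe)
          fix n x assume "Z x \<le> d + 1 / real (Suc (Suc n))"
          moreover have "1 / real (Suc (Suc n)) \<le> 1 / real (Suc n)" by (simp add: frac_le)
          ultimately show "Z x \<le> d + 1 / real (Suc n)" by linarith
        qed
      qed (rule Drange)
      have L2: "(\<Inter>n. {x\<in>D. Z x \<le> d + 1 / Suc n}) = {x\<in>D. Z x \<le> d}"
      proof (intro equalityI subsetI)
        fix x assume x: "x \<in> {x\<in>D. Z x \<le> d}"
        have "Z x \<le> d + 1 / real (Suc n)" for n
          using x by (smt (verit) mem_Collect_eq of_nat_0_le_iff divide_nonneg_nonneg)
        then show "x \<in> (\<Inter>n. {x\<in>D. Z x \<le> d + 1 / Suc n})" using x by simp
      next
        fix x assume x: "x \<in> (\<Inter>n. {x\<in>D. Z x \<le> d + 1 / Suc n})"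
        then have xD: "x \<in> D" by simp
        have "Z x \<le> d"
        proof (rule ccontr)
          assume "\<not> Z x \<le> d"
          then obtain n where "1 / real (Suc n) < Z x - d"
            by (metis diff_gt_0_iff_gt not_le_imp_less nat_approx_posE)
          moreover have "Z x \<le> d + 1 / Suc n" using x by simp
          ultimately show False by linarith
        qed
        then show "x \<in> {x\<in>D. Z x \<le> d}" using xD by simp
      qed
      have L3: "\<tau> \<le> prob {x\<in>D. Z x \<le> d + 1 / Suc n}" for n
      proof -
        have "d < d + 1 / Suc n" by simp
        then obtain s where "s \<in> T" "s < d + 1 / Suc n"
          using cInf_less_iff[OF Tne Tbdd] unfolding d_def by blast
        then show ?thesis using phimono[of s "d + 1 / Suc n"] unfolding T_def phi_def by auto
      qed
      show ?thesis unfolding phi_def using L1 L3 unfolding L2 by (intro LIMSEQ_le_const[of _ "prob {x\<in>D. Z x \<le> d}"]) auto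
    qed
    define q where "q = prob {x\<in>D. Z x < d}"
    have qle: "q \<le> \<tau>"
    proof -
      have L1: "(\<lambda>n. prob {x\<in>D. Z x \<le> d - 1 / Suc n}) \<longlonglongrightarrow> prob (\<Union>n. {x\<in>D. Z x \<le> d - 1 / Suc n})"
      proof (intro finite_Lim_measure_incseq)
        show "incseq (\<lambda>n. {x \<in> D. Z x \<le> d - 1 / real (Suc n)})"
        proof (rule incseq_SucI, safe)
          fix n x assume "Z x \<le> d - 1 / real (Suc n)"
          moreover have "1 / real (Suc (Suc n)) \<le> 1 / real (Suc n)" by (simp add: frac_le)
          ultimately show "Z x \<le> d - 1 / real (Suc (Suc n))" by linarith
        qed
      qed (rule Drange)
      have L2: "(\<Union>n. {x\<in>D. Z x \<le> d - 1 / Suc n}) = {x\<in>D. Z x < d}"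
      proof (safe)
        fix x n assume "Z x \<le> d - 1 / real (Suc n)" then show "Z x < d"
          by (smt (verit) of_nat_0_less_iff divide_pos_pos zero_less_Suc)
      next
        fix x assume x: "x \<in> D" "Z x < d"
        then obtain n where "1 / real (Suc n) < d - Z x"
          by (metis diff_gt_0_iff_gt nat_approx_posE)
        then show "x \<in> (\<Union>n. {x\<in>D. Z x \<le> d - 1 / Suc n})" using x by (auto intro!: exI[of _ n])
      qed
      have L3: "prob {x\<in>D. Z x \<le> d - 1 / Suc n} \<le> \<tau>" for n
      proof -
        have "d - 1 / Suc n < d" by simp
        then have "d - 1 / Suc n \<notin> T" using cInf_lower[OF _ Tbdd] unfolding d_def by force
        then show ?thesis unfolding T_def phi_def by simp
      qed
      show ?thesis unfolding q_def using L1 L3 unfolding L2 by (intro LIMSEQ_le_const2[of _ "prob {x\<in>D. Z x < d}"]) auto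
    qed
    define E where "E = {x\<in>D. Z x = d}"
    have E: "E \<in> events" unfolding E_def by simp
    have "{x\<in>D. Z x \<le> d} = {x\<in>D. Z x < d} \<union> E" unfolding E_def by auto
    then have "phi d = q + prob E" unfolding phi_def q_def E_def
      by (simp add: finite_measure_Union disjoint_iff)
    then have "\<tau> - q \<le> prob E" using phid by simp
    then obtain Bs where Bs: "Bs \<in> events" "Bs \<subseteq> E" "prob Bs = \<tau> - q"
      using sierpinski[OF al E, of "\<tau> - q"] qle by auto
    define N where "N = L \<union> {x\<in>D. Z x < d} \<union> Bs"
    have N: "N \<in> events" unfolding N_def using L Bs by auto
    have "prob N = prob (L \<union> {x\<in>D. Z x < d}) + prob Bs"
      unfolding N_def using Bs L Dlt[of d] by (intro finite_measure_Union) (auto simp: E_def, auto simp: D_def)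
    also have "prob (L \<union> {x\<in>D. Z x < d}) = prob L + q"
      unfolding q_def using L Dlt[of d] by (intro finite_measure_Union) (auto simp: D_def)
    finally have pN: "prob N = t" using Bs unfolding \<tau>_def by simp
    have NL': "N \<subseteq> L'" unfolding N_def using LL Bs by (auto simp: D_def E_def)
    have "zlower M Z N"
      unfolding zlower_def
    proof (intro conjI ballI)
      show "N \<subseteq> space M" using N sets.sets_into_space by auto
    next
      fix x y assume x: "x \<in> N" and y: "y \<in> space M - N"
      show "Z x \<le> Z y"
      proof (cases "y \<in> L'")
        case False
        then show ?thesis using L'(2) x y NL' unfolding zlower_def by auto
      next
        case True
        then have yD: "y \<in> D" "y \<notin> L" using y unfolding N_def D_def by auto
        then have yd: "d \<le> Z y" using y unfolding N_def by auto
        have "x \<in> L \<or> (x \<in> D \<and> Z x < d) \<or> x \<in> Bs" using x unfolding N_def by auto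
        then show ?thesis
        proof (elim disjE)
          assume "x \<in> L" then show ?thesis using L(2) yD y unfolding zlower_def by auto
        next
          assume "x \<in> D \<and> Z x < d" then show ?thesis using yd by simp
        next
          assume "x \<in> Bs" then have "Z x = d" using Bs unfolding E_def by auto
          then show ?thesis using yd by simp
        qed
      qed
    qed
    then show ?thesis using N pN NL' unfolding N_def by blast
  qed
qed

end

definition midset :: "'a measure \<Rightarrow> ('a \<Rightarrow> real) \<Rightarrow> 'a set \<Rightarrow> 'a set \<Rightarrow> real \<Rightarrow> 'a set" where
  "midset M Z L L' t = (SOME N. N \<in> sets M \<and> zlower M Z N \<and> L \<subseteq> N \<and> N \<subseteq> L' \<and> measure M N = t)"

primrec fam :: "'a measure \<Rightarrow> ('a \<Rightarrow> real) \<Rightarrow> nat \<Rightarrow> nat \<Rightarrow> 'a set" where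
  "fam M Z 0 k = (if k = 0 then {} else space M)"
| "fam M Z (Suc n) k = (if even k then fam M Z n (k div 2)
     else midset M Z (fam M Z n (k div 2)) (fam M Z n (Suc (k div 2))) (real k / 2 ^ Suc n))"

context prob_space
begin

lemma fam_props:
  assumes al: "atomless M" and Zm[measurable]: "Z \<in> borel_measurable M"
  shows "(\<forall>k \<le> 2^n. fam M Z n k \<in> events \<and> zlower M Z (fam M Z n k) \<and> prob (fam M Z n k) = real k / 2^n) \<and>
         (\<forall>k < 2^n. fam M Z n k \<subseteq> fam M Z n (Suc k))"
proof (induction n)
  case 0
  have "k \<le> 1 \<Longrightarrow> k = 0 \<or> k = 1" for k :: nat by auto
  then show ?case by (auto simp: zlower_def prob_space)
next
  case (Suc n)
  note IH = Suc.IH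
  have odd_case: "fam M Z (Suc n) k \<in> events \<and> zlower M Z (fam M Z (Suc n) k) \<and> prob (fam M Z (Suc n) k) = real k / 2^Suc n
      \<and> fam M Z n (k div 2) \<subseteq> fam M Z (Suc n) k \<and> fam M Z (Suc n) k \<subseteq> fam M Z n (Suc (k div 2))"
    if k: "odd k" "k < 2 ^ Suc n" for k
  proof -
    define j where "j = k div 2"
    have kj: "k = 2 * j + 1" unfolding j_def using k(1) by presburger
    have j: "j < 2 ^ n" using k(2) kj by simp
    have A: "fam M Z n j \<in> events" "zlower M Z (fam M Z n j)" "prob (fam M Z n j) = real j / 2^n"
      using IH j by auto
    have B: "fam M Z n (Suc j) \<in> events" "zlower M Z (fam M Z n (Suc j))" "prob (fam M Z n (Suc j)) = real (Suc j) / 2^n"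
      using IH j by (auto simp del: of_nat_Suc)
    have AB: "fam M Z n j \<subseteq> fam M Z n (Suc j)" using IH j by auto
    have t1: "real j / 2^n \<le> real k / 2^Suc n" using kj by (simp add: field_simps)
    have t2: "real k / 2^Suc n \<le> real (Suc j) / 2^n" using kj by (simp add: field_simps)
    have ex: "\<exists>N\<in>events. zlower M Z N \<and> fam M Z n j \<subseteq> N \<and> N \<subseteq> fam M Z n (Suc j) \<and> prob N = real k / 2^Suc n"
      using zlower_mid[OF al Zm A(1,2) B(1,2) AB] t1 t2 A(3) B(3) by simp
    have "fam M Z (Suc n) k = midset M Z (fam M Z n j) (fam M Z n (Suc j)) (real k / 2 ^ Suc n)"
      using k(1) unfolding j_def by simp
    then show ?thesis using someI_ex[OF ex[unfolded Bex_def]] unfolding midset_def j_def[symmetric]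
      by simp
  qed
  have P1: "fam M Z (Suc n) k \<in> events \<and> zlower M Z (fam M Z (Suc n) k) \<and> prob (fam M Z (Suc n) k) = real k / 2^Suc n"
    if k: "k \<le> 2 ^ Suc n" for k
  proof (cases "even k")
    case True
    then obtain j where kj: "k = 2 * j" by blast
    then have "j \<le> 2 ^ n" using k by simp
    then show ?thesis using IH kj by (simp add: field_simps)
  next
    case False
    then have "k < 2 ^ Suc n" using k by (metis le_neq_implies_less even_numeral even_power zero_less_Suc)
    then show ?thesis using odd_case False by blast
  qed
  have P2: "fam M Z (Suc n) k \<subseteq> fam M Z (Suc n) (Suc k)" if k: "k < 2 ^ Suc n" for k
  proof (cases "even k")
    case True
    then obtain j where kj: "k = 2 * j" by blast
    have "odd (Suc k)" using True by simp
    moreover have "Suc k < 2 ^ Suc n"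
    proof (rule Suc_lessI[OF k])
      have "even ((2::nat) ^ Suc n)" by simp
      moreover have "odd (Suc k)" using True by simp
      ultimately show "Suc k \<noteq> 2 ^ Suc n" by (metis (no_types))
    qed
    ultimately have "fam M Z n (Suc k div 2) \<subseteq> fam M Z (Suc n) (Suc k)" using odd_case by blast
    moreover have "Suc k div 2 = j" "k div 2 = j" using kj by auto
    ultimately show ?thesis using True by simp
  next
    case False
    then have "fam M Z (Suc n) k \<subseteq> fam M Z n (Suc (k div 2))" using odd_case k by blast
    moreover have "Suc k div 2 = Suc (k div 2)" "even (Suc k)" using False by auto
    ultimately show ?thesis by simp
  qed
  show ?case using P1 P2 by blast
qed

lemma fam_refine: "fam M Z n k = fam M Z (n + m) (k * 2 ^ m)"
proof (induction m)
  case 0 then show ?case by simp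
next
  case (Suc m)
  have "fam M Z (n + Suc m) (k * 2 ^ Suc m) = fam M Z (n + m) (k * 2 ^ Suc m div 2)"
    by simp
  also have "k * 2 ^ Suc m div 2 = k * 2 ^ m" by simp
  finally show ?case using Suc by simp
qed

lemma fam_mono_same:
  assumes al: "atomless M" and Zm: "Z \<in> borel_measurable M" and kk: "k \<le> k'" "k' \<le> 2 ^ n"
  shows "fam M Z n k \<subseteq> fam M Z n k'"
  using kk
proof (induction k' rule: dec_induct)
  case base then show ?case by simp
next
  case (step i)
  have ch: "\<forall>k < 2^n. fam M Z n k \<subseteq> fam M Z n (Suc k)" using fam_props[OF al Zm, of n] by blast
  have "i < 2 ^ n" using step(4) by simp
  then have "fam M Z n i \<subseteq> fam M Z n (Suc i)" using ch by blast
  moreover have "fam M Z n k \<subseteq> fam M Z n i" using step(3) \<open>i < 2 ^ n\<close> by simp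
  ultimately show ?case by blast
qed

lemma fam_mono:
  assumes al: "atomless M" and Zm: "Z \<in> borel_measurable M"
    and k: "k \<le> 2 ^ n" and k': "k' \<le> 2 ^ n'" and le: "real k / 2 ^ n \<le> real k' / 2 ^ n'"
  shows "fam M Z n k \<subseteq> fam M Z n' k'"
proof -
  have e1: "fam M Z n k = fam M Z (n + n') (k * 2 ^ n')" by (rule fam_refine)
  have e2: "fam M Z n' k' = fam M Z (n + n') (k' * 2 ^ n)" using fam_refine[of Z n' k' n] by (simp add: add.commute)
  have "real k * 2 ^ n' \<le> real k' * 2 ^ n" using le by (simp add: divide_le_eq le_divide_eq mult.commute mult.left_commute)
  then have "real (k * 2 ^ n') \<le> real (k' * 2 ^ n)" by simp
  then have "k * 2 ^ n' \<le> k' * 2 ^ n" by (simp only: of_nat_le_iff)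
  moreover have "k' * 2 ^ n \<le> 2 ^ (n + n')" using k' by (simp add: power_add mult.commute)
  ultimately show ?thesis unfolding e1 e2 by (intro fam_mono_same[OF al Zm]) auto
qed

end

definition Ufun :: "'a measure \<Rightarrow> ('a \<Rightarrow> real) \<Rightarrow> 'a \<Rightarrow> real" where
  "Ufun M Z x = Inf {real k / 2 ^ n | n k. k \<le> 2 ^ n \<and> x \<in> fam M Z n k}"

context prob_space
begin

lemma fam_sets:
  assumes al: "atomless M" and Zm: "Z \<in> borel_measurable M" and k: "k \<le> 2 ^ n"
  shows "fam M Z n k \<in> events" "zlower M Z (fam M Z n k)" "prob (fam M Z n k) = real k / 2 ^ n"
  using fam_props[OF al Zm, of n] k by blast+

lemma U_basic:
  assumes al: "atomless M" and Zm: "Z \<in> borel_measurable M" and x: "x \<in> space M"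
  shows "0 \<le> Ufun M Z x" "Ufun M Z x \<le> 1"
    "Ufun M Z x < a \<longleftrightarrow> (\<exists>n k. k \<le> 2 ^ n \<and> x \<in> fam M Z n k \<and> real k / 2 ^ n < a)"
proof -
  define S where "S = {real k / 2 ^ n | n k. k \<le> 2 ^ n \<and> x \<in> fam M Z n k}"
  have U: "Ufun M Z x = Inf S" unfolding Ufun_def S_def by simp
  have 1: "1 \<in> S" unfolding S_def using x by (auto intro!: exI[of _ 0] exI[of _ 1])
  have ne: "S \<noteq> {}" using 1 by blast
  have bdd: "bdd_below S" unfolding S_def by (auto intro!: bdd_belowI[of _ 0])
  show "0 \<le> Ufun M Z x" unfolding U using ne by (intro cInf_greatest) (auto simp: S_def)
  show "Ufun M Z x \<le> 1" unfolding U using 1 bdd by (rule cInf_lower)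
  show "Ufun M Z x < a \<longleftrightarrow> (\<exists>n k. k \<le> 2 ^ n \<and> x \<in> fam M Z n k \<and> real k / 2 ^ n < a)"
    unfolding U cInf_less_iff[OF ne bdd] unfolding S_def by blast
qed

lemma U_less_set:
  assumes al: "atomless M" and Zm: "Z \<in> borel_measurable M"
  shows "{x\<in>space M. Ufun M Z x < a} = (\<Union>n. {x\<in>space M. \<exists>k \<le> 2 ^ n. x \<in> fam M Z n k \<and> real k / 2 ^ n < a})"
  using U_basic(3)[OF al Zm] by blast

lemma Bn_events:
  assumes al: "atomless M" and Zm: "Z \<in> borel_measurable M"
  shows "{x\<in>space M. \<exists>k \<le> 2 ^ n. x \<in> fam M Z n k \<and> real k / 2 ^ n < a} \<in> events"
proof -
  have "{x\<in>space M. \<exists>k \<le> 2 ^ n. x \<in> fam M Z n k \<and> real k / 2 ^ n < a} =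
     (\<Union>k\<in>{k. k \<le> 2 ^ n \<and> real k / 2 ^ n < a}. fam M Z n k)"
    using fam_sets(1)[OF al Zm] sets.sets_into_space by blast
  also have "\<dots> \<in> events" using fam_sets(1)[OF al Zm] by (intro sets.finite_UN) auto
  finally show ?thesis .
qed

lemma U_measurable:
  assumes al: "atomless M" and Zm: "Z \<in> borel_measurable M"
  shows "Ufun M Z \<in> borel_measurable M"
proof (rule borel_measurableI_less)
  fix a
  show "{x\<in>space M. Ufun M Z x < a} \<in> events"
    unfolding U_less_set[OF al Zm] using Bn_events[OF al Zm] by blast
qed

lemma U_mono:
  assumes al: "atomless M" and Zm: "Z \<in> borel_measurable M"
    and x: "x \<in> space M" and y: "y \<in> space M" and xy: "Z x < Z y"
  shows "Ufun M Z x \<le> Ufun M Z y"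
proof -
  define S where "S x = {real k / 2 ^ n | n k. k \<le> 2 ^ n \<and> x \<in> fam M Z n k}" for x
  have "S y \<subseteq> S x"
  proof
    fix r assume "r \<in> S y"
    then obtain n k where r: "r = real k / 2 ^ n" "k \<le> 2 ^ n" "y \<in> fam M Z n k" unfolding S_def by blast
    have "x \<in> fam M Z n k"
    proof (rule ccontr)
      assume "x \<notin> fam M Z n k"
      then have "Z y \<le> Z x" using fam_sets(2)[OF al Zm r(2)] r(3) x unfolding zlower_def by blast
      then show False using xy by simp
    qed
    then show "r \<in> S x" unfolding S_def using r by blast
  qed
  moreover have "1 \<in> S y" unfolding S_def using y by (auto intro!: exI[of _ 0] exI[of _ 1])
  then have "S y \<noteq> {}" by blast
  moreover have "bdd_below (S x)" unfolding S_def by (auto intro!: bdd_belowI[of _ 0])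
  ultimately show ?thesis unfolding Ufun_def S_def[symmetric] by (metis cInf_superset_mono)
qed

end

context prob_space
begin

lemma U_prob:
  assumes al: "atomless M" and Zm: "Z \<in> borel_measurable M" and a: "0 \<le> a" "a \<le> 1"
  shows "prob {x\<in>space M. Ufun M Z x < a} = a"
proof -
  define B where "B n = {x\<in>space M. \<exists>k \<le> 2 ^ n. x \<in> fam M Z n k \<and> real k / 2 ^ n < a}" for n
  have Bev: "B n \<in> events" for n unfolding B_def by (rule Bn_events[OF al Zm])
  have UB: "{x\<in>space M. Ufun M Z x < a} = (\<Union>n. B n)" unfolding B_def by (rule U_less_set[OF al Zm])
  have incB: "incseq B"
  proof (rule incseq_SucI, safe)
    fix n x assume "x \<in> B n"
    then obtain k where k: "x \<in> space M" "k \<le> 2 ^ n" "x \<in> fam M Z n k" "real k / 2 ^ n < a" unfolding B_def by blast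
    have "fam M Z n k = fam M Z (n + 1) (k * 2 ^ 1)" by (rule fam_refine)
    then have "x \<in> fam M Z (Suc n) (2 * k)" using k by simp
    moreover have "2 * k \<le> 2 ^ Suc n" using k by simp
    moreover have "real (2 * k) / 2 ^ Suc n < a" using k by simp
    ultimately show "x \<in> B (Suc n)" unfolding B_def using k by blast
  qed
  have pB: "prob (B n) \<le> a" for n
  proof (cases "{k. k \<le> 2 ^ n \<and> real k / 2 ^ n < a} = {}")
    case True
    then have "B n = {}" unfolding B_def by blast
    then show ?thesis using a by simp
  next
    case False
    define m where "m = Max {k. k \<le> 2 ^ n \<and> real k / 2 ^ n < a}"
    have fin: "finite {k. k \<le> 2 ^ n \<and> real k / 2 ^ n < a}" by simp
    have m: "m \<le> 2 ^ n" "real m / 2 ^ n < a" using Max_in[OF fin False] unfolding m_def by auto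
    have "B n \<subseteq> fam M Z n m"
    proof
      fix x assume "x \<in> B n"
      then obtain k where k: "k \<le> 2 ^ n" "x \<in> fam M Z n k" "real k / 2 ^ n < a" unfolding B_def by blast
      have "k \<le> m" unfolding m_def using k fin by (intro Max_ge) auto
      then show "x \<in> fam M Z n m" using fam_mono_same[OF al Zm _ m(1)] k by blast
    qed
    then have "prob (B n) \<le> prob (fam M Z n m)" using Bev fam_sets[OF al Zm m(1)] by (intro finite_measure_mono) auto
    also have "\<dots> = real m / 2 ^ n" using fam_sets[OF al Zm m(1)] by simp
    finally show ?thesis using m by simp
  qed
  have lim: "(\<lambda>n. prob (B n)) \<longlonglongrightarrow> prob (\<Union>n. B n)"
    using incB Bev by (intro finite_Lim_measure_incseq) auto
  have le: "prob (\<Union>n. B n) \<le> a" using lim pB by (intro LIMSEQ_le_const2[of _ _ a]) auto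
  have ge: "a - 1 / 2 ^ n \<le> prob (\<Union>n. B n)" for n
  proof (cases "a = 0")
    case True
    have "0 \<le> prob (\<Union>n. B n)" by simp
    moreover have "0 \<le> 1 / (2::real) ^ n" by simp
    ultimately show ?thesis using True by linarith
  next
    case False
    then have apos: "0 < a" using a by simp
    define c where "c = \<lceil>a * 2 ^ n\<rceil>"
    have c1: "a * 2 ^ n \<le> c" "c < a * 2 ^ n + 1" unfolding c_def by linarith+
    have cpos: "1 \<le> c" using c1 apos 
    proof -
      have "0 < a * 2 ^ n" using apos by simp
      then have "0 < c" unfolding c_def by simp
      then show ?thesis by simp
    qed
    have "c \<le> 2 ^ n" using c1 a unfolding c_def by (simp add: ceiling_le_iff)
    define k where "k = nat (c - 1)"
    have rk: "real k = real_of_int c - 1" unfolding k_def using cpos by simp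
    have k1: "k \<le> 2 ^ n" unfolding k_def using \<open>c \<le> 2 ^ n\<close> by (simp add: nat_le_iff)
    have k2: "real k / 2 ^ n < a" using rk c1 by (simp add: divide_less_eq)
    have "a * 2 ^ n - 1 \<le> real k" using rk c1 by linarith
    then have "(a * 2 ^ n - 1) / 2 ^ n \<le> real k / 2 ^ n" by (intro divide_right_mono) auto
    moreover have "(a * 2 ^ n - 1) / 2 ^ n = a - 1 / 2 ^ n" by (simp add: field_simps)
    ultimately have k3: "a - 1 / 2 ^ n \<le> real k / 2 ^ n" by simp
    have "fam M Z n k \<subseteq> B n" unfolding B_def using k1 k2 fam_sets(1)[OF al Zm k1] sets.sets_into_space by blast
    then have "prob (fam M Z n k) \<le> prob (\<Union>n. B n)" using Bev fam_sets(1)[OF al Zm k1]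
      by (intro finite_measure_mono) auto
    then show ?thesis using fam_sets(3)[OF al Zm k1] k3 by simp
  qed
  have "a \<le> prob (\<Union>n. B n)"
  proof (rule ccontr)
    assume "\<not> a \<le> prob (\<Union>n. B n)"
    then have "0 < a - prob (\<Union>n. B n)" by simp
    then obtain n where "(1/2::real) ^ n < a - prob (\<Union>n. B n)" using real_arch_pow_inv[of "a - prob (\<Union>n. B n)" "1/2"] by auto
    then show False using ge[of n] by (simp add: power_one_over)
  qed
  then show ?thesis unfolding UB using le by simp
qed

end

context prob_space
begin

lemma tail_props:
  fixes X :: "'a \<Rightarrow> real"
  assumes Xm[measurable]: "X \<in> borel_measurable M"
  assumes G_def: "G = (\<lambda>t. prob {x\<in>space M. t < X x})"
  shows "\<And>s t. s \<le> t \<Longrightarrow> G t \<le> G s"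
    and "\<And>t. (\<lambda>n. G (t + 1 / Suc n)) \<longlonglongrightarrow> G t"
    and "(\<lambda>n. G (- real n)) \<longlonglongrightarrow> 1"
    and "(\<lambda>n. G (real n)) \<longlonglongrightarrow> 0"
proof -
  show "G t \<le> G s" if "s \<le> t" for s t
    unfolding G_def using that by (intro finite_measure_mono) auto
  show "(\<lambda>n. G (t + 1 / Suc n)) \<longlonglongrightarrow> G t" for t
  proof -
    have L1: "(\<lambda>n. prob {x\<in>space M. t + 1 / Suc n < X x}) \<longlonglongrightarrow> prob (\<Union>n. {x\<in>space M. t + 1 / Suc n < X x})"
    proof (intro finite_Lim_measure_incseq)
      show "incseq (\<lambda>n. {x\<in>space M. t + 1 / real (Suc n) < X x})"
      proof (rule incseq_SucI, safe)
        fix n x assume "t + 1 / real (Suc n) < X x"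
        moreover have "1 / real (Suc (Suc n)) \<le> 1 / real (Suc n)" by (simp add: frac_le)
        ultimately show "t + 1 / real (Suc (Suc n)) < X x" by linarith
      qed
    qed auto
    have L2: "(\<Union>n. {x\<in>space M. t + 1 / Suc n < X x}) = {x\<in>space M. t < X x}"
    proof (intro equalityI subsetI)
      fix x assume "x \<in> (\<Union>n. {x\<in>space M. t + 1 / Suc n < X x})"
      then obtain n where "x \<in> space M" "t + 1 / Suc n < X x" by blast
      moreover have "0 \<le> 1 / real (Suc n)" by simp
      ultimately have "t < X x" by linarith
      then show "x \<in> {x\<in>space M. t < X x}" using \<open>x \<in> space M\<close> by simp
    next
      fix x assume x: "x \<in> {x\<in>space M. t < X x}"
      then obtain n where "1 / real (Suc n) < X x - t"
        by (metis diff_gt_0_iff_gt mem_Collect_eq nat_approx_posE)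
      then show "x \<in> (\<Union>n. {x\<in>space M. t + 1 / Suc n < X x})" using x by (auto intro!: exI[of _ n])
    qed
    show ?thesis using L1 unfolding L2 G_def .
  qed
  show "(\<lambda>n. G (- real n)) \<longlonglongrightarrow> 1"
  proof -
    have L1: "(\<lambda>n. prob {x\<in>space M. - real n < X x}) \<longlonglongrightarrow> prob (\<Union>n. {x\<in>space M. - real n < X x})"
      by (intro finite_Lim_measure_incseq) (auto simp: incseq_def)
    have L2: "(\<Union>n. {x\<in>space M. - real n < X x}) = space M"
    proof (intro equalityI subsetI)
      fix x assume x: "x \<in> space M"
      obtain n where "- X x < real n" using reals_Archimedean2 by blast
      then show "x \<in> (\<Union>n. {x\<in>space M. - real n < X x})" using x by (auto intro!: exI[of _ n])
    qed auto
    show ?thesis using L1 unfolding L2 G_def by (simp add: prob_space)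
  qed
  show "(\<lambda>n. G (real n)) \<longlonglongrightarrow> 0"
  proof -
    have L1: "(\<lambda>n. prob {x\<in>space M. real n < X x}) \<longlonglongrightarrow> prob (\<Inter>n. {x\<in>space M. real n < X x})"
      by (intro finite_Lim_measure_decseq) (auto simp: decseq_def)
    have L2: "(\<Inter>n. {x\<in>space M. real n < X x}) = {}"
    proof (intro equalityI subsetI)
      fix x assume x: "x \<in> (\<Inter>n. {x\<in>space M. real n < X x})"
      obtain n where "X x < real n" using reals_Archimedean2 by blast
      moreover have "real n < X x" using x by blast
      ultimately show "x \<in> {}" by simp
    qed auto
    show ?thesis using L1 unfolding L2 G_def by simp
  qed
qed

lemma quantile_key:
  fixes X :: "'a \<Rightarrow> real"
  assumes Xm[measurable]: "X \<in> borel_measurable M"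
  assumes G_def: "G = (\<lambda>t. prob {x\<in>space M. t < X x})"
  assumes u: "0 < u" "u < 1"
  shows "\<And>t. t < Sup {t. u < G t} \<longleftrightarrow> u < G t"
proof -
  note tp = tail_props[OF Xm G_def]
  define S where "S = {t. u < G t}"
  obtain N1 where "\<forall>n\<ge>N1. u < G (- real n)"
    using order_tendstoD(1)[OF tp(3) u(2)] unfolding eventually_sequentially by blast
  then have N1: "u < G (- real N1)" by blast
  obtain N0 where "\<forall>n\<ge>N0. G (real n) < u"
    using order_tendstoD(2)[OF tp(4) u(1)] unfolding eventually_sequentially by blast
  then have N0: "G (real N0) < u" by blast
  have ne: "S \<noteq> {}" using N1 unfolding S_def by blast
  have up: "s \<le> real N0" if "s \<in> S" for s
  proof (rule ccontr)
    assume "\<not> s \<le> real N0"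
    then have "G s \<le> G (real N0)" by (intro tp(1)) simp
    then show False using that N0 unfolding S_def by simp
  qed
  have bdd: "bdd_above S" using up by (intro bdd_aboveI[of _ "real N0"]) blast
  fix t
  show "t < Sup {t. u < G t} \<longleftrightarrow> u < G t"
    unfolding S_def[symmetric]
  proof
    assume "t < Sup S"
    then obtain s where "s \<in> S" "t < s" using less_cSup_iff[OF ne bdd] by blast
    then show "u < G t" using tp(1)[of t s] unfolding S_def by simp
  next
    assume "u < G t"
    obtain N where "\<forall>n\<ge>N. u < G (t + 1 / Suc n)"
      using order_tendstoD(1)[OF tp(2)[of t] \<open>u < G t\<close>] unfolding eventually_sequentially by blast
    then obtain n where "u < G (t + 1 / Suc n)" by blast
    then have "t + 1 / Suc n \<in> S" unfolding S_def by simp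
    then have "t + 1 / Suc n \<le> Sup S" using bdd by (rule cSup_upper)
    moreover have "0 < 1 / real (Suc n)" by simp
    ultimately show "t < Sup S" by linarith
  qed
qed

end

context prob_space
begin

lemma rearr_from_U:
  fixes X U :: "'a \<Rightarrow> real"
  assumes Xm[measurable]: "X \<in> borel_measurable M" and Um[measurable]: "U \<in> borel_measurable M"
    and U01: "\<And>x. x \<in> space M \<Longrightarrow> 0 \<le> U x \<and> U x \<le> 1"
    and Up: "\<And>a. 0 \<le> a \<Longrightarrow> a \<le> 1 \<Longrightarrow> prob {x\<in>space M. U x < a} = a"
    and G_def: "G = (\<lambda>t. prob {x\<in>space M. t < X x})"
  shows "\<exists>Xp \<in> borel_measurable M. distr M borel Xp = distr M borel X \<and>
     (\<forall>t. AE x in M. (t < Xp x \<longleftrightarrow> U x < G t)) \<and>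
     (\<forall>s. AE x in M. (s \<le> Xp x \<longleftrightarrow> (\<forall>n. U x < G (s - 1 / Suc n))))"
proof -
  define good where "good x \<longleftrightarrow> 0 < U x \<and> U x < 1" for x
  define Xp where "Xp x = (if good x then Sup {t. U x < G t} else 0)" for x
  have key: "t < Xp x \<longleftrightarrow> U x < G t" if "good x" for x t
    using quantile_key[OF Xm G_def, of "U x" t] that unfolding good_def Xp_def by simp
  have G01: "0 \<le> G t \<and> G t \<le> 1" for t unfolding G_def by simp
  have Uev: "{x\<in>space M. U x < a} \<in> events" for a by measurable
  have p0: "prob {x\<in>space M. U x \<le> 0} = 0"
  proof (rule ccontr)
    assume "prob {x\<in>space M. U x \<le> 0} \<noteq> 0"
    then have pp: "0 < prob {x\<in>space M. U x \<le> 0}" using measure_nonneg[of M] by (metis less_eq_real_def)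
    define a where "a = min 1 (prob {x\<in>space M. U x \<le> 0} / 2)"
    have a: "0 < a" "a \<le> 1" "a < prob {x\<in>space M. U x \<le> 0}" unfolding a_def using pp by auto
    have "prob {x\<in>space M. U x \<le> 0} \<le> prob {x\<in>space M. U x < a}"
      using a by (intro finite_measure_mono) auto
    then show False using Up[of a] a by simp
  qed
  have p1: "prob {x\<in>space M. 1 \<le> U x} = 0"
  proof -
    have "{x\<in>space M. 1 \<le> U x} = space M - {x\<in>space M. U x < 1}" by auto
    then have "prob {x\<in>space M. 1 \<le> U x} = 1 - prob {x\<in>space M. U x < 1}"
      using prob_compl[OF Uev[of 1]] by simp
    then show ?thesis using Up[of 1] by simp
  qed
  have AEgood: "AE x in M. good x"
  proof -
    define N where "N = {x\<in>space M. U x \<le> 0} \<union> {x\<in>space M. 1 \<le> U x}"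
    have Nev: "N \<in> events" unfolding N_def by measurable
    have N: "{x\<in>space M. \<not> good x} = N"
      unfolding good_def N_def by auto
    have "prob N \<le> prob {x\<in>space M. U x \<le> 0} + prob {x\<in>space M. 1 \<le> U x}"
      unfolding N_def by (intro measure_subadditive) auto
    moreover have "0 \<le> prob N" by simp
    ultimately have "prob N = 0" using p0 p1 by linarith
    then have "emeasure M N = 0" by (simp add: emeasure_eq_measure)
    then show ?thesis using AE_iff_measurable[OF Nev N] by simp
  qed
  have Xpm: "Xp \<in> borel_measurable M"
  proof (rule borel_measurableI_greater)
    fix t
    have "{x\<in>space M. t < Xp x} = {x\<in>space M. (good x \<and> U x < G t) \<or> (\<not> good x \<and> t < 0)}"
    proof (intro Collect_cong conj_cong refl)
      fix x show "t < Xp x \<longleftrightarrow> (good x \<and> U x < G t) \<or> (\<not> good x \<and> t < 0)"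
        using key[of x t] unfolding Xp_def by (cases "good x") simp_all
    qed
    also have "\<dots> \<in> events" unfolding good_def by measurable
    finally show "{x\<in>space M. t < Xp x} \<in> events" .
  qed
  have AE1: "AE x in M. (t < Xp x \<longleftrightarrow> U x < G t)" for t
    using AEgood by eventually_elim (simp add: key)
  have probXp: "prob {x\<in>space M. t < Xp x} = G t" for t
  proof -
    have "prob {x\<in>space M. t < Xp x} = prob {x\<in>space M. U x < G t}"
      using AE1[of t] Xpm Uev by (intro prob_eq_AE) auto
    then show ?thesis using Up G01 by simp
  qed
  have dist: "distr M borel Xp = distr M borel X"
  proof (rule cdf_unique)
    show "real_distribution (distr M borel Xp)" using Xpm by (rule real_distribution_distr)
    show "real_distribution (distr M borel X)" using Xm by (rule real_distribution_distr)
    show "cdf (distr M borel Xp) = cdf (distr M borel X)"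
    proof
      fix t
      have "cdf (distr M borel Xp) t = prob (Xp -` {..t} \<inter> space M)"
        unfolding cdf_def2 using Xpm by (simp add: measure_distr)
      also have "Xp -` {..t} \<inter> space M = space M - {x\<in>space M. t < Xp x}" by auto
      also have "prob \<dots> = 1 - G t" using probXp Xpm by (subst prob_compl) auto
      also have "1 - G t = prob (space M - {x\<in>space M. t < X x})" unfolding G_def by (subst prob_compl) auto
      also have "space M - {x\<in>space M. t < X x} = X -` {..t} \<inter> space M" by auto
      also have "prob \<dots> = cdf (distr M borel X) t" unfolding cdf_def2 using Xm by (simp add: measure_distr)
      finally show "cdf (distr M borel Xp) t = cdf (distr M borel X) t" .
    qed
  qed
  have seq: "s \<le> y \<longleftrightarrow> (\<forall>n. s - 1 / Suc n < y)" for s y :: real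
  proof
    assume sy: "s \<le> y"
    show "\<forall>n. s - 1 / Suc n < y"
    proof
      fix n
      have "0 < 1 / real (Suc n)" by simp
      then show "s - 1 / Suc n < y" using sy by linarith
    qed
  next
    assume h: "\<forall>n. s - 1 / Suc n < y"
    show "s \<le> y"
    proof (rule ccontr)
      assume "\<not> s \<le> y"
      then obtain n where "1 / real (Suc n) < s - y" by (metis diff_gt_0_iff_gt not_le_imp_less nat_approx_posE)
      moreover have "s - 1 / Suc n < y" using h by blast
      ultimately show False by linarith
    qed
  qed
  have AE2: "AE x in M. (s \<le> Xp x \<longleftrightarrow> (\<forall>n. U x < G (s - 1 / Suc n)))" for s
    using AEgood by eventually_elim (simp add: key seq[of s])
  show ?thesis using Xpm dist AE1 AE2 by blast
qed

end

context prob_space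
begin

lemma rearrangement:
  fixes X Z :: "'a \<Rightarrow> real"
  assumes al: "atomless M" and Zm[measurable]: "Z \<in> borel_measurable M" and Xm[measurable]: "X \<in> borel_measurable M"
  shows "\<exists>Xp \<in> borel_measurable M. distr M borel Xp = distr M borel X \<and>
     (\<forall>t. \<exists>L\<in>events. zlower M Z L \<and> (AE x in M. x \<in> L \<longleftrightarrow> t < Xp x)) \<and>
     (\<forall>s. \<exists>L\<in>events. zlower M Z L \<and> (AE x in M. x \<in> L \<longleftrightarrow> s \<le> Xp x))"
proof -
  define U where "U = Ufun M Z"
  define G where "G = (\<lambda>t. prob {x\<in>space M. t < X x})"
  have Um[measurable]: "U \<in> borel_measurable M" unfolding U_def by (rule U_measurable[OF al Zm])
  have U01: "\<And>x. x \<in> space M \<Longrightarrow> 0 \<le> U x \<and> U x \<le> 1" unfolding U_def using U_basic[OF al Zm] by blast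
  have Up: "\<And>a. 0 \<le> a \<Longrightarrow> a \<le> 1 \<Longrightarrow> prob {x\<in>space M. U x < a} = a" unfolding U_def by (rule U_prob[OF al Zm])
  have Umono: "\<And>x y. x \<in> space M \<Longrightarrow> y \<in> space M \<Longrightarrow> Z x < Z y \<Longrightarrow> U x \<le> U y"
    unfolding U_def by (rule U_mono[OF al Zm])
  obtain Xp where Xp: "Xp \<in> borel_measurable M" "distr M borel Xp = distr M borel X"
    "\<And>t. AE x in M. (t < Xp x \<longleftrightarrow> U x < G t)"
    "\<And>s. AE x in M. (s \<le> Xp x \<longleftrightarrow> (\<forall>n. U x < G (s - 1 / Suc n)))"
    using rearr_from_U[OF Xm Um U01 Up G_def] by blast
  have L1: "\<exists>L\<in>events. zlower M Z L \<and> (AE x in M. x \<in> L \<longleftrightarrow> t < Xp x)" for t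
  proof (intro bexI[of _ "{x\<in>space M. U x < G t}"] conjI)
    show "{x\<in>space M. U x < G t} \<in> events" by measurable
    show "AE x in M. (x \<in> {x\<in>space M. U x < G t}) \<longleftrightarrow> t < Xp x"
      using Xp(3)[of t] AE_space by eventually_elim auto
    show "zlower M Z {x\<in>space M. U x < G t}"
      unfolding zlower_def
    proof (intro conjI ballI)
      fix x y assume x: "x \<in> {x\<in>space M. U x < G t}" and y: "y \<in> space M - {x\<in>space M. U x < G t}"
      show "Z x \<le> Z y"
      proof (rule ccontr)
        assume "\<not> Z x \<le> Z y"
        then have "U y \<le> U x" using Umono[of y x] x y by auto
        then show False using x y by auto
      qed
    qed auto
  qed
  have L2: "\<exists>L\<in>events. zlower M Z L \<and> (AE x in M. x \<in> L \<longleftrightarrow> s \<le> Xp x)" for s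
  proof (intro bexI[of _ "{x\<in>space M. \<forall>n. U x < G (s - 1 / Suc n)}"] conjI)
    show "{x\<in>space M. \<forall>n. U x < G (s - 1 / Suc n)} \<in> events" by measurable
    show "AE x in M. (x \<in> {x\<in>space M. \<forall>n. U x < G (s - 1 / Suc n)}) \<longleftrightarrow> s \<le> Xp x"
      using Xp(4)[of s] AE_space by eventually_elim auto
    show "zlower M Z {x\<in>space M. \<forall>n. U x < G (s - 1 / Suc n)}"
      unfolding zlower_def
    proof (intro conjI ballI)
      fix x y assume x: "x \<in> {x\<in>space M. \<forall>n. U x < G (s - 1 / Suc n)}"
        and y: "y \<in> space M - {x\<in>space M. \<forall>n. U x < G (s - 1 / Suc n)}"
      show "Z x \<le> Z y"
      proof (rule ccontr)
        assume "\<not> Z x \<le> Z y"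
        then have "U y \<le> U x" using Umono[of y x] x y by auto
        moreover obtain n where "\<not> U y < G (s - 1 / Suc n)" using y by auto
        moreover have "U x < G (s - 1 / Suc n)" using x by auto
        ultimately show False by linarith
      qed
    qed auto
  qed
  show ?thesis using Xp(1,2) L1 L2 by blast
qed

end

context prob_space
begin

lemma bathtub:
  fixes Z :: "'a \<Rightarrow> real"
  assumes sub: "subalgebra M G" and Zm[measurable]: "Z \<in> borel_measurable M" and Zint: "integrable M Z"
    and L: "L \<in> events" "zlower M Z L" and A: "A \<in> events" and pLA: "prob L = prob A"
  shows "(\<integral>x. Z x * indicator L x \<partial>M) \<le> (\<integral>x. real_cond_exp M G Z x * indicator A x \<partial>M)"
proof -
  interpret S: finite_measure_subalgebra M G
    unfolding finite_measure_subalgebra_def finite_measure_subalgebra_axioms_def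
    using sub finite_measure_axioms by simp
  define W where "W = real_cond_exp M G Z"
  define \<xi>0 where "\<xi>0 = real_cond_exp M G (indicator A :: 'a \<Rightarrow> real)"
  define \<xi> where "\<xi> x = max 0 (min 1 (\<xi>0 x))" for x
  have Am[measurable]: "A \<in> sets M" using A by simp
  have indA: "integrable M (indicator A :: 'a \<Rightarrow> real)" using A by (intro integrable_real_indicator) (auto simp: less_top[symmetric])
  have Wm[measurable]: "W \<in> borel_measurable G" "W \<in> borel_measurable M" unfolding W_def by simp_all
  have \<xi>0m[measurable]: "\<xi>0 \<in> borel_measurable G" "\<xi>0 \<in> borel_measurable M" unfolding \<xi>0_def by simp_all
  have \<xi>m[measurable]: "\<xi> \<in> borel_measurable G" "\<xi> \<in> borel_measurable M" unfolding \<xi>_def by simp_all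
  have Wint: "integrable M W" unfolding W_def using Zint by (rule S.real_cond_exp_int(1))
  have \<xi>0pos: "AE x in M. 0 \<le> \<xi>0 x" unfolding \<xi>0_def by (rule S.real_cond_exp_pos) auto
  have \<xi>0le: "AE x in M. \<xi>0 x \<le> 1" unfolding \<xi>0_def by (rule S.real_cond_exp_le_c[OF indA]) auto
  have \<xi>eq: "AE x in M. \<xi> x = \<xi>0 x" using \<xi>0pos \<xi>0le by eventually_elim (auto simp: \<xi>_def)
  have \<xi>01: "0 \<le> \<xi> x" "\<xi> x \<le> 1" for x unfolding \<xi>_def by auto
  have \<xi>int: "integrable M \<xi>"
    using \<xi>01 by (intro integrable_const_bound[of _ 1]) auto
  have \<xi>Zint: "integrable M (\<lambda>x. \<xi> x * Z x)"
    using Zint by (rule Bochner_Integration.integrable_bound) (auto simp: \<xi>01 abs_mult mult_le_cancel_right1 intro!: mult_left_le_one_le)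
  have int\<xi>: "(\<integral>x. \<xi> x \<partial>M) = prob A"
  proof -
    have "(\<integral>x. \<xi> x \<partial>M) = (\<integral>x. \<xi>0 x \<partial>M)" using \<xi>eq by (intro integral_cong_AE) auto
    also have "\<dots> = (\<integral>x. indicator A x \<partial>M)" unfolding \<xi>0_def by (rule S.real_cond_exp_int(2)[OF indA])
    also have "\<dots> = prob A" by simp
    finally show ?thesis .
  qed
  have key: "(\<integral>x. \<xi> x * Z x \<partial>M) = (\<integral>x. W x * indicator A x \<partial>M)"
  proof -
    have "(\<integral>x. \<xi> x * Z x \<partial>M) = (\<integral>x. \<xi> x * W x \<partial>M)"
      unfolding W_def by (rule S.real_cond_exp_intg(2)[symmetric, OF \<xi>Zint]) auto
    also have "\<dots> = (\<integral>x. W x * \<xi>0 x \<partial>M)" using \<xi>eq by (intro integral_cong_AE) auto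
    also have "\<dots> = (\<integral>x. W x * indicator A x \<partial>M)"
      unfolding \<xi>0_def by (rule S.real_cond_exp_intg(2)) (auto intro: integrable_real_mult_indicator[OF Am Wint])
    finally show ?thesis .
  qed
  have ZLint: "integrable M (\<lambda>x. Z x * indicator L x)" using L Zint by (intro integrable_real_mult_indicator) auto
  have Lsp: "L \<subseteq> space M" using L sets.sets_into_space by auto
  consider "L = {}" | "L = space M" | "L \<noteq> {}" "L \<noteq> space M" by blast
  then show ?thesis
  proof cases
    case 1
    then have "prob A = 0" using pLA by simp
    then have "AE x in M. x \<notin> A" using A by (simp add: prob_eq_0)
    then have "(\<integral>x. W x * indicator A x \<partial>M) = (\<integral>x. 0 \<partial>M)" by (intro integral_cong_AE) auto
    then show ?thesis using 1 W_def by simp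
  next
    case 2
    then have "prob A = 1" using pLA prob_space by simp
    then have "AE x in M. x \<in> A" using A by (simp add: prob_eq_1)
    then have "(\<integral>x. W x * indicator A x \<partial>M) = (\<integral>x. W x \<partial>M)" by (intro integral_cong_AE) auto
    also have "\<dots> = (\<integral>x. Z x \<partial>M)" unfolding W_def by (rule S.real_cond_exp_int(2)[OF Zint])
    also have "\<dots> = (\<integral>x. Z x * indicator L x \<partial>M)" using 2 by (intro Bochner_Integration.integral_cong) auto
    finally show ?thesis unfolding W_def by simp
  next
    case 3
    obtain x0 where x0: "x0 \<in> L" using 3 by blast
    obtain y0 where y0: "y0 \<in> space M - L" using 3 Lsp by blast
    define d where "d = Sup (Z ` L)"
    have Lzl: "\<forall>x\<in>L. \<forall>y\<in>space M - L. Z x \<le> Z y" using L unfolding zlower_def by blast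
    have bdd: "bdd_above (Z ` L)" using Lzl y0 by (intro bdd_aboveI[of _ "Z y0"]) blast
    have dx: "Z x \<le> d" if "x \<in> L" for x unfolding d_def using bdd that by (intro cSup_upper) auto
    have dy: "d \<le> Z y" if "y \<in> space M - L" for y unfolding d_def using x0 Lzl that by (intro cSup_least) auto
    have pw: "(indicator L x - \<xi> x) * (Z x - d) \<le> 0" if "x \<in> space M" for x
    proof (cases "x \<in> L")
      case True
      then have "0 \<le> indicator L x - \<xi> x" "Z x - d \<le> 0" using dx \<xi>01[of x] by auto
      then show ?thesis by (simp add: mult_nonneg_nonpos)
    next
      case False
      then have "indicator L x - \<xi> x \<le> 0" "0 \<le> Z x - d" using dy that \<xi>01[of x] by auto
      then show ?thesis by (simp add: mult_nonpos_nonneg)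
    qed
    have indL: "integrable M (indicator L :: 'a \<Rightarrow> real)" using L by (intro integrable_real_indicator) (auto simp: less_top[symmetric])
    have expand: "(\<lambda>x. (indicator L x - \<xi> x) * (Z x - d)) = (\<lambda>x. (Z x * indicator L x - \<xi> x * Z x) + (d * \<xi> x - d * indicator L x))"
      by (auto simp: algebra_simps)
    have "0 \<le> (\<integral>x. - ((indicator L x - \<xi> x) * (Z x - d)) \<partial>M)"
      using pw by (intro integral_nonneg_AE AE_I2) (simp add: neg_0_le_iff_le)
    then have "(\<integral>x. (indicator L x - \<xi> x) * (Z x - d) \<partial>M) \<le> 0" by simp
    also have "(\<integral>x. (indicator L x - \<xi> x) * (Z x - d) \<partial>M) =
        ((\<integral>x. Z x * indicator L x \<partial>M) - (\<integral>x. \<xi> x * Z x \<partial>M)) + (d * (\<integral>x. \<xi> x \<partial>M) - d * (\<integral>x. indicator L x \<partial>M))"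
      unfolding expand using ZLint \<xi>Zint \<xi>int indL by simp
    finally have "(\<integral>x. Z x * indicator L x \<partial>M) \<le> (\<integral>x. \<xi> x * Z x \<partial>M)"
      using int\<xi> pLA L by simp
    then show ?thesis using key unfolding W_def by simp
  qed
qed

end

context prob_space
begin

lemma bathtub_upper:
  fixes Z :: "'a \<Rightarrow> real"
  assumes sub: "subalgebra M G" and Zm[measurable]: "Z \<in> borel_measurable M" and Zint: "integrable M Z"
    and K: "K \<in> events" "zlower M Z (space M - K)" and A: "A \<in> events" and pKA: "prob K = prob A"
  shows "(\<integral>x. real_cond_exp M G Z x * indicator A x \<partial>M) \<le> (\<integral>x. Z x * indicator K x \<partial>M)"
proof -
  interpret S: finite_measure_subalgebra M G
    unfolding finite_measure_subalgebra_def finite_measure_subalgebra_axioms_def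
    using sub finite_measure_axioms by simp
  define W where "W = real_cond_exp M G Z"
  have Wint: "integrable M W" unfolding W_def using Zint by (rule S.real_cond_exp_int(1))
  have intW: "(\<integral>x. W x \<partial>M) = (\<integral>x. Z x \<partial>M)" unfolding W_def using Zint by (rule S.real_cond_exp_int(2))
  have "prob (space M - K) = prob (space M - A)" using K A pKA by (simp add: prob_compl)
  then have b: "(\<integral>x. Z x * indicator (space M - K) x \<partial>M) \<le> (\<integral>x. W x * indicator (space M - A) x \<partial>M)"
    unfolding W_def using K A by (intro bathtub[OF sub Zm Zint]) auto
  have e1: "(\<integral>x. Z x * indicator (space M - K) x \<partial>M) = (\<integral>x. Z x \<partial>M) - (\<integral>x. Z x * indicator K x \<partial>M)"
  proof -
    have "(\<integral>x. Z x * indicator (space M - K) x \<partial>M) = (\<integral>x. Z x - Z x * indicator K x \<partial>M)"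
      by (intro Bochner_Integration.integral_cong) (auto simp: indicator_def)
    also have "\<dots> = (\<integral>x. Z x \<partial>M) - (\<integral>x. Z x * indicator K x \<partial>M)"
      using Zint K by (intro Bochner_Integration.integral_diff integrable_real_mult_indicator) auto
    finally show ?thesis .
  qed
  have e2: "(\<integral>x. W x * indicator (space M - A) x \<partial>M) = (\<integral>x. W x \<partial>M) - (\<integral>x. W x * indicator A x \<partial>M)"
  proof -
    have "(\<integral>x. W x * indicator (space M - A) x \<partial>M) = (\<integral>x. W x - W x * indicator A x \<partial>M)"
      by (intro Bochner_Integration.integral_cong) (auto simp: indicator_def)
    also have "\<dots> = (\<integral>x. W x \<partial>M) - (\<integral>x. W x * indicator A x \<partial>M)"
      using Wint A by (intro Bochner_Integration.integral_diff integrable_real_mult_indicator) auto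
    finally show ?thesis .
  qed
  have "(\<integral>x. W x * indicator A x \<partial>M) \<le> (\<integral>x. Z x * indicator K x \<partial>M)"
    using b e1 e2 intW by linarith
  then show ?thesis unfolding W_def .
qed

end

lemma layer_cake:
  fixes f :: "'a \<Rightarrow> real" and g :: "'a \<Rightarrow> ennreal"
  assumes sf: "sigma_finite_measure M" and gm[measurable]: "g \<in> borel_measurable M" and fm[measurable]: "f \<in> borel_measurable M"
  shows "(\<integral>\<^sup>+x. g x * ennreal (max (f x) 0) \<partial>M) =
    (\<integral>\<^sup>+t. indicator {0..} t * (\<integral>\<^sup>+x. g x * indicator {x. t < f x} x \<partial>M) \<partial>lborel)"
proof -
  interpret sigma_finite_measure M by (rule sf)
  interpret P: pair_sigma_finite M lborel
    by (intro pair_sigma_finite.intro sf lborel.sigma_finite_measure_axioms)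
  define F where "F x t = (if 0 \<le> t \<and> t < f x then g x else 0)" for x t
  have Fm: "(\<lambda>(x, t). F x t) \<in> borel_measurable (M \<Otimes>\<^sub>M lborel)" unfolding F_def by measurable
  have inner: "(\<integral>\<^sup>+t. F x t \<partial>lborel) = g x * ennreal (max (f x) 0)" for x
  proof -
    have "(\<integral>\<^sup>+t. F x t \<partial>lborel) = (\<integral>\<^sup>+t. g x * indicator {0..<max (f x) 0} t \<partial>lborel)"
      unfolding F_def by (intro nn_integral_cong) (auto simp: indicator_def)
    also have "\<dots> = g x * emeasure lborel {0..<max (f x) 0}" by (simp add: nn_integral_cmult)
    also have "\<dots> = g x * ennreal (max (f x) 0)" by simp
    finally show ?thesis .
  qed
  have "(\<integral>\<^sup>+x. g x * ennreal (max (f x) 0) \<partial>M) = (\<integral>\<^sup>+x. \<integral>\<^sup>+t. F x t \<partial>lborel \<partial>M)"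
    using inner by simp
  also have "\<dots> = (\<integral>\<^sup>+t. \<integral>\<^sup>+x. F x t \<partial>M \<partial>lborel)"
    using P.Fubini'[OF Fm] by simp
  also have "\<dots> = (\<integral>\<^sup>+t. indicator {0..} t * (\<integral>\<^sup>+x. g x * indicator {x. t < f x} x \<partial>M) \<partial>lborel)"
  proof (intro nn_integral_cong)
    fix t :: real
    show "(\<integral>\<^sup>+x. F x t \<partial>M) = indicator {0..} t * (\<integral>\<^sup>+x. g x * indicator {x. t < f x} x \<partial>M)"
    proof (cases "0 \<le> t")
      case True
      then show ?thesis unfolding F_def by (auto intro!: nn_integral_cong simp: indicator_def)
    next
      case False
      then show ?thesis unfolding F_def by simp
    qed
  qed
  finally show ?thesis .
qed

lemma enn2ereal_fin: "(n::ennreal) \<noteq> \<infinity> \<Longrightarrow> \<exists>r. enn2ereal n = ereal r"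
  by (metis enn2ereal_inject enn2ereal_nonneg enn2ereal_top
    infinity_ennreal_def not_MInfty_nonneg sgn_ereal.cases)

lemma expQ_le:
  assumes p: "(\<integral>\<^sup>+x. ennreal (Z x * max (X' x) 0) \<partial>M) \<le> (\<integral>\<^sup>+x. ennreal (W x * max (X x) 0) \<partial>M)"
    and n: "(\<integral>\<^sup>+x. ennreal (W x * max (- X x) 0) \<partial>M) \<le> (\<integral>\<^sup>+x. ennreal (Z x * max (- X' x) 0) \<partial>M)"
  shows "expQ M Z X' \<le> expQ M W X"
proof -
  define pZ where "pZ = (\<integral>\<^sup>+x. ennreal (Z x * max (X' x) 0) \<partial>M)"
  define pW where "pW = (\<integral>\<^sup>+x. ennreal (W x * max (X x) 0) \<partial>M)"
  define nZ where "nZ = (\<integral>\<^sup>+x. ennreal (Z x * max (- X' x) 0) \<partial>M)"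
  define nW where "nW = (\<integral>\<^sup>+x. ennreal (W x * max (- X x) 0) \<partial>M)"
  have eZ: "expQ M Z X' = (if nZ = \<infinity> then - \<infinity> else enn2ereal pZ - enn2ereal nZ)"
    unfolding expQ_def pZ_def nZ_def Let_def by simp
  have eW: "expQ M W X = (if nW = \<infinity> then - \<infinity> else enn2ereal pW - enn2ereal nW)"
    unfolding expQ_def pW_def nW_def Let_def by simp
  have p': "pZ \<le> pW" and n': "nW \<le> nZ" using p n unfolding pZ_def pW_def nZ_def nW_def by auto
  show ?thesis
  proof (cases "nZ = \<infinity>")
    case True then show ?thesis unfolding eZ by simp
  next
    case False
    then have nWf: "nW \<noteq> \<infinity>" using n' by (metis infinity_ennreal_def neq_top_trans)
    have a: "enn2ereal pZ \<le> enn2ereal pW" using p' by (simp add: less_eq_ennreal.rep_eq)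
    have b: "enn2ereal nW \<le> enn2ereal nZ" using n' by (simp add: less_eq_ennreal.rep_eq)
    obtain r where r: "enn2ereal nZ = ereal r" using enn2ereal_fin[OF False] by blast
    obtain r' where r': "enn2ereal nW = ereal r'" using enn2ereal_fin[OF nWf] by blast
    have "enn2ereal pZ - enn2ereal nZ \<le> enn2ereal pW - enn2ereal nW"
      using a b unfolding r r' by (intro ereal_minus_mono) auto
    then show ?thesis unfolding eZ eW using False nWf by simp
  qed
qed

context prob_space
begin

lemma nn_ind_eq:
  fixes h :: "'a \<Rightarrow> real"
  assumes hint: "integrable M h" and h0: "AE x in M. 0 \<le> h x" and S: "S \<in> events"
  shows "(\<integral>\<^sup>+x. ennreal (h x) * indicator S x \<partial>M) = ennreal (\<integral>x. h x * indicator S x \<partial>M)"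
proof -
  have e1: "(\<integral>\<^sup>+x. ennreal (h x) * indicator S x \<partial>M) = (\<integral>\<^sup>+x. ennreal (h x * indicator S x) \<partial>M)"
    by (intro nn_integral_cong) (auto simp: indicator_def)
  have "AE x in M. 0 \<le> h x * indicator S x" using h0 by eventually_elim (simp add: indicator_def)
  then have "(\<integral>\<^sup>+x. ennreal (h x * indicator S x) \<partial>M) = ennreal (\<integral>x. h x * indicator S x \<partial>M)"
    by (intro nn_integral_eq_integral integrable_real_mult_indicator[OF S hint])
  then show ?thesis using e1 by simp
qed

lemma prob_distr_eq:
  fixes X Y :: "'a \<Rightarrow> real"
  assumes [measurable]: "X \<in> borel_measurable M" "Y \<in> borel_measurable M" and d: "distr M borel X = distr M borel Y"
    and B: "B \<in> sets borel"
  shows "prob {x\<in>space M. X x \<in> B} = prob {x\<in>space M. Y x \<in> B}"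
proof -
  have "prob {x\<in>space M. X x \<in> B} = measure (distr M borel X) B"
    using B by (subst measure_distr) (auto intro!: arg_cong[where f="prob"])
  also have "\<dots> = measure (distr M borel Y) B" using d by simp
  also have "\<dots> = prob {x\<in>space M. Y x \<in> B}"
    using B by (subst measure_distr) (auto intro!: arg_cong[where f="prob"])
  finally show ?thesis .
qed

lemma main_bound:
  fixes Z X :: "'a \<Rightarrow> real"
  assumes al: "atomless M" and sub: "subalgebra M G" and Zd: "Z \<in> densities M"
    and Xm[measurable]: "X \<in> borel_measurable M"
  shows "\<exists>Xp\<in>borel_measurable M. distr M borel Xp = distr M borel X \<and>
           expQ M Z Xp \<le> expQ M (real_cond_exp M G Z) X"
proof -
  interpret S: finite_measure_subalgebra M G
    unfolding finite_measure_subalgebra_def finite_measure_subalgebra_axioms_def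
    using sub finite_measure_axioms by simp
  have Zm[measurable]: "Z \<in> borel_measurable M" and Z0: "AE x in M. 0 \<le> Z x" and Zint: "integrable M Z"
    using Zd unfolding densities_def by auto
  define W where "W = real_cond_exp M G Z"
  have Wm[measurable]: "W \<in> borel_measurable M" unfolding W_def by simp
  have W0: "AE x in M. 0 \<le> W x" unfolding W_def using Z0 by (intro S.real_cond_exp_pos) auto
  have Wint: "integrable M W" unfolding W_def using Zint by (rule S.real_cond_exp_int(1))
  obtain Xp where Xpm[measurable]: "Xp \<in> borel_measurable M" and dist: "distr M borel Xp = distr M borel X"
    and LT: "\<And>t. \<exists>L\<in>events. zlower M Z L \<and> (AE x in M. x \<in> L \<longleftrightarrow> t < Xp x)"
    and LS: "\<And>s. \<exists>L\<in>events. zlower M Z L \<and> (AE x in M. x \<in> L \<longleftrightarrow> s \<le> Xp x)"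
    using rearrangement[OF al Zm Xm] by blast
  have sf: "sigma_finite_measure M" by (rule sigma_finite_measure_axioms)
  have pos_t: "(\<integral>\<^sup>+x. ennreal (Z x) * indicator {x. t < Xp x} x \<partial>M) \<le> (\<integral>\<^sup>+x. ennreal (W x) * indicator {x. t < X x} x \<partial>M)" for t
  proof -
    obtain L where L: "L \<in> events" "zlower M Z L" "AE x in M. x \<in> L \<longleftrightarrow> t < Xp x" using LT by blast
    define A where "A = {x\<in>space M. t < X x}"
    have A: "A \<in> events" unfolding A_def by measurable
    have "prob L = prob {x\<in>space M. t < Xp x}"
      using L(3) L(1) by (intro measure_eq_AE) (auto elim!: eventually_mono)
    also have "\<dots> = prob A" unfolding A_def using prob_distr_eq[OF Xpm Xm dist, of "{t<..}"] by simp
    finally have pLA: "prob L = prob A" .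
    have "(\<integral>\<^sup>+x. ennreal (Z x) * indicator {x. t < Xp x} x \<partial>M) = (\<integral>\<^sup>+x. ennreal (Z x) * indicator L x \<partial>M)"
      using L(3) by (intro nn_integral_cong_AE) (auto elim!: eventually_mono simp: indicator_def)
    also have "\<dots> = ennreal (\<integral>x. Z x * indicator L x \<partial>M)" by (rule nn_ind_eq[OF Zint Z0 L(1)])
    also have "\<dots> \<le> ennreal (\<integral>x. W x * indicator A x \<partial>M)"
      unfolding W_def using bathtub[OF sub Zm Zint L(1,2) A pLA] by (rule ennreal_leI)
    also have "\<dots> = (\<integral>\<^sup>+x. ennreal (W x) * indicator A x \<partial>M)" by (rule nn_ind_eq[OF Wint W0 A, symmetric])
    also have "\<dots> = (\<integral>\<^sup>+x. ennreal (W x) * indicator {x. t < X x} x \<partial>M)"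
      unfolding A_def by (intro nn_integral_cong) (auto simp: indicator_def)
    finally show ?thesis .
  qed
  have neg_t: "(\<integral>\<^sup>+x. ennreal (W x) * indicator {x. t < - X x} x \<partial>M) \<le> (\<integral>\<^sup>+x. ennreal (Z x) * indicator {x. t < - Xp x} x \<partial>M)" for t
  proof -
    obtain L where L: "L \<in> events" "zlower M Z L" "AE x in M. x \<in> L \<longleftrightarrow> - t \<le> Xp x" using LS by blast
    define K where "K = space M - L"
    have K: "K \<in> events" unfolding K_def using L by auto
    have Lsp: "L \<subseteq> space M" using L(2) unfolding zlower_def by blast
    have zK: "zlower M Z (space M - K)" unfolding K_def using Lsp L(2) by (simp add: Diff_Diff_Int Int_absorb1)
    have AK: "AE x in M. x \<in> K \<longleftrightarrow> t < - Xp x" unfolding K_def using L(3) AE_space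
      by eventually_elim auto
    define A where "A = {x\<in>space M. t < - X x}"
    have A: "A \<in> events" unfolding A_def by measurable
    have "prob K = prob {x\<in>space M. t < - Xp x}"
      using AK K by (intro measure_eq_AE) (auto elim!: eventually_mono)
    also have "\<dots> = prob A" unfolding A_def using prob_distr_eq[OF Xpm Xm dist, of "{..< -t}"]
      by (simp add: less_minus_iff minus_less_iff)
    finally have pKA: "prob K = prob A" .
    have "(\<integral>\<^sup>+x. ennreal (W x) * indicator {x. t < - X x} x \<partial>M) = (\<integral>\<^sup>+x. ennreal (W x) * indicator A x \<partial>M)"
      unfolding A_def by (intro nn_integral_cong) (auto simp: indicator_def)
    also have "\<dots> = ennreal (\<integral>x. W x * indicator A x \<partial>M)" by (rule nn_ind_eq[OF Wint W0 A])
    also have "\<dots> \<le> ennreal (\<integral>x. Z x * indicator K x \<partial>M)"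
      unfolding W_def using bathtub_upper[OF sub Zm Zint K zK A pKA] by (rule ennreal_leI)
    also have "\<dots> = (\<integral>\<^sup>+x. ennreal (Z x) * indicator K x \<partial>M)" by (rule nn_ind_eq[OF Zint Z0 K, symmetric])
    also have "\<dots> = (\<integral>\<^sup>+x. ennreal (Z x) * indicator {x. t < - Xp x} x \<partial>M)"
      using AK by (intro nn_integral_cong_AE) (auto elim!: eventually_mono simp: indicator_def)
    finally show ?thesis .
  qed
  have split: "ennreal (a * max b 0) = ennreal a * ennreal (max b 0)" for a b :: real
    by (rule ennreal_mult'') simp
  have P: "(\<integral>\<^sup>+x. ennreal (Z x * max (Xp x) 0) \<partial>M) \<le> (\<integral>\<^sup>+x. ennreal (W x * max (X x) 0) \<partial>M)"
  proof -
    have "(\<integral>\<^sup>+x. ennreal (Z x * max (Xp x) 0) \<partial>M) =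
        (\<integral>\<^sup>+t. indicator {0..} t * (\<integral>\<^sup>+x. ennreal (Z x) * indicator {x. t < Xp x} x \<partial>M) \<partial>lborel)"
      unfolding split by (rule layer_cake[OF sf]) auto
    also have "\<dots> \<le> (\<integral>\<^sup>+t. indicator {0..} t * (\<integral>\<^sup>+x. ennreal (W x) * indicator {x. t < X x} x \<partial>M) \<partial>lborel)"
      by (intro nn_integral_mono mult_left_mono pos_t) auto
    also have "\<dots> = (\<integral>\<^sup>+x. ennreal (W x * max (X x) 0) \<partial>M)"
      unfolding split by (rule layer_cake[OF sf, symmetric]) auto
    finally show ?thesis .
  qed
  have N: "(\<integral>\<^sup>+x. ennreal (W x * max (- X x) 0) \<partial>M) \<le> (\<integral>\<^sup>+x. ennreal (Z x * max (- Xp x) 0) \<partial>M)"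
  proof -
    have "(\<integral>\<^sup>+x. ennreal (W x * max (- X x) 0) \<partial>M) =
        (\<integral>\<^sup>+t. indicator {0..} t * (\<integral>\<^sup>+x. ennreal (W x) * indicator {x. t < - X x} x \<partial>M) \<partial>lborel)"
      unfolding split by (rule layer_cake[OF sf]) auto
    also have "\<dots> \<le> (\<integral>\<^sup>+t. indicator {0..} t * (\<integral>\<^sup>+x. ennreal (Z x) * indicator {x. t < - Xp x} x \<partial>M) \<partial>lborel)"
      by (intro nn_integral_mono mult_left_mono neg_t) auto
    also have "\<dots> = (\<integral>\<^sup>+x. ennreal (Z x * max (- Xp x) 0) \<partial>M)"
      unfolding split by (rule layer_cake[OF sf, symmetric]) auto
    finally show ?thesis .
  qed
  have "expQ M Z Xp \<le> expQ M W X" by (rule expQ_le[OF P N])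
  then show ?thesis using Xpm dist unfolding W_def by blast
qed

end

theorem corollaryA2:
  fixes M :: "'a measure" and u :: "('a \<Rightarrow> real) \<Rightarrow> ereal"
    and Y :: "'a \<Rightarrow> 'b::euclidean_space"
  assumes "prob_space M" and "atomless M"
    and "coherent_utility M u" and "law_invariant M u"
    and "Y \<in> borel_measurable M"
  shows "(\<lambda>Z. real_cond_exp M (vimage_algebra (space M) Y borel) Z) ` determining_set M u
           \<subseteq> determining_set M u"
proof
  interpret prob_space M by (rule assms(1))
  define G where "G = vimage_algebra (space M) Y borel"
  have sub: "subalgebra M G"
    unfolding subalgebra_def G_def using assms(5) by (simp add: measurable_iff_sets)
  interpret S: finite_measure_subalgebra M G
    unfolding finite_measure_subalgebra_def finite_measure_subalgebra_axioms_def
    using sub finite_measure_axioms by simp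
  fix W assume "W \<in> (\<lambda>Z. real_cond_exp M (vimage_algebra (space M) Y borel) Z) ` determining_set M u"
  then obtain Z where Z: "Z \<in> determining_set M u" and WZ: "W = real_cond_exp M G Z"
    unfolding G_def by blast
  have Zd: "Z \<in> densities M" and Zu: "\<And>X. X \<in> borel_measurable M \<Longrightarrow> u X \<le> expQ M Z X"
    using Z unfolding determining_set_def by auto
  have Zm[measurable]: "Z \<in> borel_measurable M" and Z0: "AE x in M. 0 \<le> Z x" and Zint: "integrable M Z"
    and Z1: "(\<integral>x. Z x \<partial>M) = 1"
    using Zd unfolding densities_def by auto
  have Wd: "W \<in> densities M"
    unfolding densities_def WZ
  proof (intro CollectI conjI)
    show "real_cond_exp M G Z \<in> borel_measurable M" by simp
    show "AE x in M. 0 \<le> real_cond_exp M G Z x" using Z0 by (intro S.real_cond_exp_pos) auto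
    show "integrable M (real_cond_exp M G Z)" using Zint by (rule S.real_cond_exp_int(1))
    show "(\<integral>x. real_cond_exp M G Z x \<partial>M) = 1" using S.real_cond_exp_int(2)[OF Zint] Z1 by simp
  qed
  have "u X \<le> expQ M W X" if Xm: "X \<in> borel_measurable M" for X
  proof -
    obtain Xp where Xp: "Xp \<in> borel_measurable M" "distr M borel Xp = distr M borel X"
      "expQ M Z Xp \<le> expQ M (real_cond_exp M G Z) X"
      using main_bound[OF assms(2) sub Zd Xm] by blast
    have "u X = u Xp" using assms(4) Xm Xp(1,2) unfolding law_invariant_def by metis
    also have "\<dots> \<le> expQ M Z Xp" by (rule Zu[OF Xp(1)])
    also have "\<dots> \<le> expQ M W X" using Xp(3) unfolding WZ .
    finally show ?thesis .
  qed
  then show "W \<in> determining_set M u" unfolding determining_set_def using Wd by blast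
qed


end
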